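(* Let $\beta>0$, let $\mathbf{s}=(\mathbf{s}_{\mathrm{sys}},\mathbf{s}_{\mathrm{env}})$ with $\mathbf{s}_{\mathrm{sys}}=(\mathbf{s}_1,\dots,\mathbf{s}_K)$, and let $\mathbf{x}=(\mathbf{x}_1,\dots,\mathbf{x}_K)$ where $\mathbf{x}_i$ and $\mathbf{s}_i$ live in the same Euclidean space. Let $p_1,\dots,p_K$ be prior densities and $U_{\mathrm{env}}$ an environment energy. Suppose the interaction energy is quadratic in $\mathbf{s}_{\mathrm{sys}}$ given $\mathbf{s}_{\mathrm{env}}$: $$\exp(-\beta U_{\mathrm{int}}(\mathbf{s}_{\mathrm{sys}},\mathbf{s}_{\mathrm{env}}))\propto\mathcal{N}(\mathbf{s}_{\mathrm{sys}}\mid\boldsymbol{\mu}_c(\mathbf{s}_{\mathrm{env}}),\boldsymbol{\Sigma}_c(\mathbf{s}_{\mathrm{env}})).$$ Assume the forward kernels at diffusion time $t>0$ satisfy $$\prod_{i=1}^K q_t^{(i)}(\mathbf{s}_i\mid\mathbf{x}_i)=\mathcal{N}(\mathbf{s}_{\mathrm{sys}}\mid\mathbf{A}_t\mathbf{x},\boldsymbol{\Sigma}_t)$$ with $\mathbf{A}_t$ square and invertible, and let the finite-$t$ context schedule be $$q_{\mathrm{ctx}}(\mathbf{s},t)\propto\exp(-\beta U_{\mathrm{env}}(\mathbf{s}_{\mathrm{env}}))\,q_{\mathrm{int}}(\mathbf{s}_{\mathrm{sys}}\mid\mathbf{s}_{\mathrm{env}},t),\qquad q_{\mathrm{int}}(\mathbf{s}_{\mathrm{sys}}\mid\mathbf{s}_{\mathrm{env}},t)=\mathcal{N}(\mathbf{s}_{\mathrm{sys}}\mid\boldsymbol{\mu}_q(\mathbf{s}_{\mathrm{env}},t),\boldsymbol{\Sigma}_q(\mathbf{s}_{\mathrm{env}},t)).$$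 Define $$\pi_t(\mathbf{x},\mathbf{s}_{\mathrm{env}})\propto\int q_{\mathrm{ctx}}(\mathbf{s},t)\prod_{i=1}^K p_i(\mathbf{x}_i)\,q_t^{(i)}(\mathbf{s}_i\mid\mathbf{x}_i)\,d\mathbf{s}_{\mathrm{sys}},\qquad \pi_0(\mathbf{x},\mathbf{s}_{\mathrm{env}})\propto\exp(-\beta U_{\mathrm{env}}(\mathbf{s}_{\mathrm{env}}))\Big(\prod_{i=1}^K p_i(\mathbf{x}_i)\Big)\exp(-\beta U_{\mathrm{int}}(\mathbf{x},\mathbf{s}_{\mathrm{env}})).$$ Then $\pi_t(\mathbf{x},\mathbf{s}_{\mathrm{env}})\propto\pi_0(\mathbf{x},\mathbf{s}_{\mathrm{env}})$ if and only if $$\boldsymbol{\mu}_q(\mathbf{s}_{\mathrm{env}},t)=\mathbf{A}_t\boldsymbol{\mu}_c(\mathbf{s}_{\mathrm{env}}),\qquad \boldsymbol{\Sigma}_q(\mathbf{s}_{\mathrm{env}},t)=\mathbf{A}_t\boldsymbol{\Sigma}_c(\mathbf{s}_{\mathrm{env}})\mathbf{A}_t^\top-\boldsymbol{\Sigma}_t.$$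
   Context: $\mathcal{N}(\mathbf{z}\mid\boldsymbol{\mu},\boldsymbol{\Sigma})$ denotes the multivariate Gaussian density in $\mathbf{z}$ with mean $\boldsymbol{\mu}$ and (symmetric positive-definite) covariance $\boldsymbol{\Sigma}$. Here $\mathbf{s}_{\mathrm{sys}}$ collects the system coordinates coupled to the priors through the projections $\Phi_i(\mathbf{s})=\mathbf{s}_i$, and $q_t^{(i)}$ is the forward diffusion kernel of prior $i$. The proportionality $\pi_t(\mathbf{x},\mathbf{s}_{\mathrm{env}})\propto\pi_0(\mathbf{x},\mathbf{s}_{\mathrm{env}})$ is understood as proportionality in $\mathbf{x}$ with a constant that may depend on $\mathbf{s}_{\mathrm{env}}$ and $t$ but not on $\mathbf{x}$. *)

theory Defs
  imports "HOL-Analysis.Analysis"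
begin

definition spd :: "real^'n^'n \<Rightarrow> bool" where
  "spd S \<longleftrightarrow> transpose S = S \<and> (\<forall>v. v \<noteq> 0 \<longrightarrow> v \<bullet> (S *v v) > 0)"

definition gauss :: "real^'n \<Rightarrow> real^'n^'n \<Rightarrow> real^'n \<Rightarrow> real" where
  "gauss mu S z =
     exp (- (1/2) * ((z - mu) \<bullet> (matrix_inv S *v (z - mu))))
     / sqrt ((2 * pi) ^ CARD('n) * det S)"

text \<open>x (or s) depends only on the coordinates of block i.\<close>
definition same_block :: "('d \<Rightarrow> 'k) \<Rightarrow> 'k \<Rightarrow> real^'d \<Rightarrow> real^'d \<Rightarrow> bool" where
  "same_block blk i x y \<longleftrightarrow> (\<forall>j. blk j = i \<longrightarrow> x $ j = y $ j)"

end

theory Submission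
  imports Defs "HOL-Probability.Probability"
begin



abbreviation qf :: "real^'n^'n \<Rightarrow> real^'n \<Rightarrow> real" where
  "qf S v \<equiv> v \<bullet> (S *v v)"

lemma inv_ok:
  fixes S :: "real^'n^'n"
  assumes "invertible S"
  shows "S ** matrix_inv S = mat 1" "matrix_inv S ** S = mat 1"
proof -
  have "\<exists>A'. S ** A' = mat 1 \<and> A' ** S = mat 1" using assms by (simp add: invertible_def)
  then have "S ** matrix_inv S = mat 1 \<and> matrix_inv S ** S = mat 1"
    unfolding matrix_inv_def by (rule someI_ex)
  then show "S ** matrix_inv S = mat 1" "matrix_inv S ** S = mat 1" by auto
qed

lemma left_inv_unique:
  fixes S X :: "real^'n^'n"
  assumes "X ** S = mat 1" "invertible S"
  shows "X = matrix_inv S"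
  by (metis assms inv_ok(1) matrix_mul_assoc matrix_mul_lid matrix_mul_rid)

lemma sym_left_inv:
  fixes S X :: "real^'n^'n"
  assumes "X ** S = mat 1" "transpose S = S"
  shows "transpose X = X"
proof -
  have SX: "S ** X = mat 1" using assms(1) matrix_left_right_inverse by blast
  have "transpose X ** S = mat 1"
    by (metis SX assms(2) matrix_transpose_mul transpose_mat)
  then show ?thesis
    by (metis SX matrix_mul_assoc matrix_mul_lid matrix_mul_rid)
qed

lemma inner_sym:
  fixes S :: "real^'n^'n"
  assumes "transpose S = S"
  shows "x \<bullet> (S *v y) = y \<bullet> (S *v x)"
  by (metis assms dot_lmul_matrix inner_commute transpose_matrix_vector)

lemma inner_transpose:
  fixes S :: "real^'n^'m"
  shows "x \<bullet> (S *v y) = (transpose S *v x) \<bullet> y"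
  by (simp add: dot_lmul_matrix)

lemma spd_invertible:
  fixes S :: "real^'n^'n"
  assumes "spd S" shows "invertible S"
proof -
  have "inj ((*v) S)"
  proof (rule injI)
    fix x y assume "S *v x = S *v y"
    then have "S *v (x - y) = 0" by (simp add: matrix_vector_mult_diff_distrib)
    then have "qf S (x - y) = 0" by simp
    then show "x = y" using assms unfolding spd_def by (metis less_irrefl eq_iff_diff_eq_0)
  qed
  then show ?thesis using matrix_left_invertible_injective invertible_left_inverse by blast
qed

lemma spd_inv:
  fixes S :: "real^'n^'n"
  assumes "spd S" shows "spd (matrix_inv S)"
proof -
  have iS: "invertible S" using assms spd_invertible by blast
  have symS: "transpose S = S" using assms spd_def by blast
  show ?thesis unfolding spd_def
  proof (intro conjI allI impI)
    show "transpose (matrix_inv S) = matrix_inv S"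
      using sym_left_inv[OF inv_ok(2)[OF iS] symS] .
    fix v :: "real^'n" assume v: "v \<noteq> 0"
    define w where "w = matrix_inv S *v v"
    have Sw: "S *v w = v" unfolding w_def
      by (simp add: matrix_vector_mul_assoc inv_ok(1)[OF iS])
    then have "w \<noteq> 0" using v by auto
    then have "qf S w > 0" using assms spd_def by blast
    then show "v \<bullet> (matrix_inv S *v v) > 0"
      using Sw w_def by (metis inner_commute)
  qed
qed

lemma spd_add:
  fixes S T :: "real^'n^'n"
  assumes "spd S" "spd T" shows "spd (S + T)"
  using assms unfolding spd_def
  by (auto simp: matrix_vector_mult_add_rdistrib inner_add_right transpose_def vec_eq_iff add_pos_pos)

lemma scaleR_mv:
  fixes M :: "real^'n^'m"
  shows "(k *\<^sub>R M) *v v = k *\<^sub>R (M *v v)"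
  by (simp add: matrix_vector_mult_def vec_eq_iff sum_distrib_left mult.assoc)

lemma spd_det_pos:
  fixes S :: "real^'n^'n"
  assumes "spd S" shows "det S > 0"
proof (rule ccontr)
  assume "\<not> det S > 0"
  define f where "f = (\<lambda>l::real. det ((1 - l) *\<^sub>R mat 1 + l *\<^sub>R S))"
  have cont: "continuous_on {0..1} f"
    unfolding f_def det_def
    by (intro continuous_intros)
  have "f 1 \<le> 0" "0 \<le> f 0" using \<open>\<not> det S > 0\<close> by (auto simp: f_def)
  then obtain l where l: "0 \<le> l" "l \<le> 1" "f l = 0"
    using IVT2'[of f 1 0 0, OF _ _ _ cont] by auto
  have "spd ((1 - l) *\<^sub>R mat 1 + l *\<^sub>R S)"
    unfolding spd_def
  proof (intro conjI allI impI)
    show "transpose ((1 - l) *\<^sub>R mat 1 + l *\<^sub>R S) = (1 - l) *\<^sub>R mat 1 + l *\<^sub>R S"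
      using assms unfolding spd_def by (auto simp: transpose_def vec_eq_iff mat_def)
    fix v :: "real^'n" assume v: "v \<noteq> 0"
    have "qf S v > 0" using assms v spd_def by blast
    moreover have "v \<bullet> v > 0" using v by simp
    moreover have "v \<bullet> (((1 - l) *\<^sub>R mat 1 + l *\<^sub>R S) *v v) = (1 - l) * (v \<bullet> v) + l * qf S v"
      by (simp add: matrix_vector_mult_add_rdistrib inner_add_right scaleR_mv)
    ultimately show "0 < v \<bullet> (((1 - l) *\<^sub>R mat 1 + l *\<^sub>R S) *v v)"
      using l by (smt (verit) mult_nonneg_nonneg mult_pos_pos)
  qed
  then have "det ((1 - l) *\<^sub>R mat 1 + l *\<^sub>R S) \<noteq> 0"
    using spd_invertible invertible_det_nz by blast
  then show False using l f_def by simp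
qed



lemma qf_lower:
  fixes P :: "real^'n^'n"
  assumes "spd P"
  shows "\<exists>l>0. \<forall>u. l * (u \<bullet> u) \<le> qf P u"
proof -
  have cont: "continuous_on (sphere 0 1) (\<lambda>u::real^'n. qf P u)"
    by (intro continuous_intros)
  have ne: "sphere (0::real^'n) 1 \<noteq> {}"
    by (metis empty_iff norm_Basis SOME_Basis mem_sphere_0)
  obtain x0 where x0: "x0 \<in> sphere 0 1" "\<And>y. y \<in> sphere 0 1 \<Longrightarrow> qf P x0 \<le> qf P y"
    using continuous_attains_inf[OF compact_sphere ne cont] by blast
  have "x0 \<noteq> 0" using x0(1) by auto
  then have lpos: "qf P x0 > 0" using assms spd_def by blast
  have "qf P x0 * (u \<bullet> u) \<le> qf P u" for u
  proof (cases "u = 0")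
    case True then show ?thesis by simp
  next
    case False
    define v where "v = (1 / norm u) *\<^sub>R u"
    have v: "v \<in> sphere 0 1" using False by (simp add: v_def)
    have u: "u = norm u *\<^sub>R v" using False by (simp add: v_def)
    have "qf P u = (norm u)^2 * qf P v"
      by (subst u, subst u) (simp add: matrix_vector_mult_scaleR power2_eq_square)
    moreover have "u \<bullet> u = (norm u)^2" by (simp add: power2_norm_eq_inner)
    ultimately show ?thesis using x0(2)[OF v]
      by (metis mult.commute mult_right_mono zero_le_power2)
  qed
  then show ?thesis using lpos by blast
qed

lemma integrable_prod_basis:
  fixes g :: "real \<Rightarrow> real"
  assumes g: "integrable lborel g" and nn: "\<And>t. 0 \<le> g t"
  shows "integrable lborel (\<lambda>x::'a::euclidean_space. \<Prod>b\<in>Basis. g (x \<bullet> b))"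
proof -
  have gm[measurable]: "g \<in> borel_measurable borel"
    using g by (simp add: borel_measurable_integrable)
  have fin: "(\<integral>\<^sup>+x. ennreal (g x) \<partial>lborel) < \<infinity>"
    using g nn by (simp add: integrable_iff_bounded)
  have "(\<integral>\<^sup>+x. ennreal (norm (\<Prod>b\<in>Basis. g ((x::'a) \<bullet> b))) \<partial>lborel)
       = (\<integral>\<^sup>+x. (\<Prod>b\<in>(Basis::'a set). ennreal (g ((x::'a) \<bullet> b))) \<partial>lborel)"
    by (auto intro!: nn_integral_cong simp: prod_nonneg nn prod_ennreal abs_prod)
  also have "\<dots> = (\<Prod>b\<in>(Basis::'a set). (\<integral>\<^sup>+x. ennreal (g x) \<partial>lborel))"
    by (rule nn_integral_lborel_prod) auto
  also have "\<dots> < \<infinity>"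
    using fin by (simp add: less_top[symmetric] ennreal_prod_eq_top power_eq_top_ennreal)
  finally show ?thesis
    unfolding integrable_iff_bounded by simp
qed

lemma integrable_exp_sq:
  fixes a :: real assumes a: "a > 0"
  shows "integrable lborel (\<lambda>t::real. exp (- a * t^2))"
proof -
  define \<sigma> where "\<sigma> = sqrt (1 / (2 * a))"
  have s2: "\<sigma>^2 = 1 / (2 * a)" using a by (simp add: \<sigma>_def)
  have spos: "\<sigma> > 0" using a by (simp add: \<sigma>_def)
  have "(\<lambda>t. exp (- a * t^2)) = (\<lambda>t. sqrt (2 * pi * \<sigma>^2) * normal_density 0 \<sigma> t)"
  proof
    fix t :: real
    have nz: "sqrt (2 * pi * \<sigma>^2) \<noteq> 0" using spos by simp
    have "sqrt (2 * pi * \<sigma>^2) * normal_density 0 \<sigma> t = exp (- ((t - 0)^2) / (2 * \<sigma>^2))"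
      unfolding normal_density_def using nz by simp
    also have "- ((t - 0)^2) / (2 * \<sigma>^2) = - a * t^2" using a by (simp add: s2)
    finally show "exp (- a * t^2) = sqrt (2 * pi * \<sigma>^2) * normal_density 0 \<sigma> t" by simp
  qed
  moreover have "integrable lborel (\<lambda>t. sqrt (2 * pi * \<sigma>^2) * normal_density 0 \<sigma> t)"
    using spos by (intro integrable_mult_right) auto
  ultimately show ?thesis by (simp only:)
qed

lemma integrable_exp_norm:
  fixes a :: real assumes a: "a > 0"
  shows "integrable lborel (\<lambda>u::'a::euclidean_space. exp (- a * (u \<bullet> u)))"
proof -
  have e: "u \<bullet> u = (\<Sum>b\<in>Basis. (u \<bullet> b)^2)" for u :: 'a
    by (subst euclidean_inner) (simp add: power2_eq_square)
  have "(\<lambda>u::'a. exp (- a * (u \<bullet> u))) = (\<lambda>u. \<Prod>b\<in>Basis. exp (- a * (u \<bullet> b)^2))"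
  proof
    fix u :: 'a
    have "exp (- a * (u \<bullet> u)) = exp (\<Sum>b\<in>Basis. - a * (u \<bullet> b)^2)"
      by (simp only: e sum_distrib_left[symmetric])
    also have "\<dots> = (\<Prod>b\<in>Basis. exp (- a * (u \<bullet> b)^2))"
      by (rule exp_sum) simp
    finally show "exp (- a * (u \<bullet> u)) = (\<Prod>b\<in>Basis. exp (- a * (u \<bullet> b)^2))" .
  qed
  then show ?thesis
    using integrable_prod_basis[OF integrable_exp_sq[OF a]] by simp
qed

lemma lborel_shift: "lborel = distr lborel borel (\<lambda>x::'a::euclidean_space. m + x)"
  using lborel_affine[of 1 m] by (simp add: density_1)

lemma gauss_kernel:
  fixes P :: "real^'n^'n"
  assumes "spd P"
  shows "\<exists>J>0. \<forall>m. integrable lborel (\<lambda>s. exp (-(1/2) * qf P (s - m))) \<and>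
                 (\<integral>s. exp (-(1/2) * qf P (s - m)) \<partial>lborel) = J"
proof -
  obtain l where l: "l > 0" "\<And>u. l * (u \<bullet> u) \<le> qf P u" using qf_lower[OF assms] by blast
  define f0 where "f0 = (\<lambda>u::real^'n. exp (-(1/2) * qf P u))"
  have f0m[measurable]: "f0 \<in> borel_measurable borel"
    unfolding f0_def by (intro borel_measurable_continuous_onI continuous_intros)
  have int0: "integrable lborel f0"
  proof (rule Bochner_Integration.integrable_bound[OF integrable_exp_norm[of "l/2"]])
    show "0 < l / 2" using l by simp
    show "f0 \<in> borel_measurable lborel" by simp
    show "AE x in lborel. norm (f0 x) \<le> norm (exp (- (l / 2) * (x \<bullet> x)))"
      using l(2) by (auto simp: f0_def)
  qed
  have shift: "integrable lborel (\<lambda>s. f0 (s - m)) \<and> (\<integral>s. f0 (s - m) \<partial>lborel) = integral\<^sup>L lborel f0" for m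
  proof -
    have "integrable (distr lborel borel (\<lambda>x. m + x)) (\<lambda>s. f0 (s - m))"
      by (subst integrable_distr_eq) (auto simp: int0)
    moreover have "integral\<^sup>L (distr lborel borel (\<lambda>x. m + x)) (\<lambda>s. f0 (s - m)) = integral\<^sup>L lborel f0"
      by (subst integral_distr) auto
    ultimately show ?thesis using lborel_shift[of m] by simp
  qed
  have pos: "integral\<^sup>L lborel f0 > 0"
  proof -
    have "integral\<^sup>L lborel f0 \<ge> 0" by (simp add: f0_def)
    moreover have "integral\<^sup>L lborel f0 \<noteq> 0"
    proof
      assume "integral\<^sup>L lborel f0 = 0"
      then have "AE x in lborel. f0 x = 0"
        using integral_nonneg_eq_0_iff_AE[OF int0] by (simp add: f0_def)
      then have "AE x in (lborel :: (real^'n) measure). False" by (simp add: f0_def)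
      then obtain N :: "(real^'n) set" where N: "{x \<in> space lborel. \<not> False} \<subseteq> N" "emeasure lborel N = 0"
        by (elim AE_E) blast
      then have "N = (UNIV :: (real^'n) set)" by auto
      then show False using N(2) by simp
    qed
    ultimately show ?thesis by simp
  qed
  show ?thesis using shift pos unfolding f0_def by blast
qed



lemma mm_add_r: fixes A B C :: "real^'n^'n" shows "(A + B) ** C = A ** C + B ** C"
  by (simp add: matrix_matrix_mult_def vec_eq_iff sum.distrib distrib_right)
lemma mm_diff_r: fixes A B C :: "real^'n^'n" shows "(A - B) ** C = A ** C - B ** C"
  by (simp add: matrix_matrix_mult_def vec_eq_iff sum_subtractf left_diff_distrib)
lemma mm_diff_l: fixes A B C :: "real^'n^'n" shows "C ** (A - B) = C ** A - C ** B"
  by (simp add: matrix_matrix_mult_def vec_eq_iff sum_subtractf right_diff_distrib)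
lemma transpose_add': fixes A B :: "real^'n^'n" shows "transpose (A + B) = transpose A + transpose B"
  by (simp add: transpose_def vec_eq_iff)

lemma complete_sq:
  fixes Q T :: "real^'n^'n"
  assumes symQ: "transpose Q = Q" and symT: "transpose T = T" and inv: "invertible (Q + T)"
  shows "qf Q u + qf T (u - d) =
         qf (Q + T) (u - matrix_inv (Q + T) *v (T *v d)) + qf (T - T ** matrix_inv (Q + T) ** T) d"
proof -
  define P where "P = Q + T"
  define Pi where "Pi = matrix_inv P"
  define w where "w = Pi *v (T *v d)"
  have symP: "transpose P = P" using symQ symT by (simp add: P_def transpose_add')
  have Pw: "P *v w = T *v d"
    unfolding w_def Pi_def using inv_ok(1)[OF inv] by (simp add: matrix_vector_mul_assoc P_def matrix_mul_assoc)
  have e1: "qf P (u - w) = qf P u - 2 * (u \<bullet> (T *v d)) + w \<bullet> (T *v d)"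
  proof -
    have "qf P (u - w) = qf P u - u \<bullet> (P *v w) - w \<bullet> (P *v u) + w \<bullet> (P *v w)"
      by (simp add: matrix_vector_mult_diff_distrib inner_diff_left inner_diff_right)
    moreover have "w \<bullet> (P *v u) = u \<bullet> (P *v w)" using inner_sym[OF symP] by blast
    ultimately show ?thesis using Pw by simp
  qed
  have e2: "qf (T - T ** Pi ** T) d = qf T d - w \<bullet> (T *v d)"
  proof -
    have "(T - T ** Pi ** T) *v d = T *v d - T *v w"
      by (simp add: matrix_vector_mult_diff_rdistrib w_def matrix_vector_mul_assoc matrix_mul_assoc)
    then have "qf (T - T ** Pi ** T) d = qf T d - d \<bullet> (T *v w)"
      by (simp add: inner_diff_right)
    moreover have "d \<bullet> (T *v w) = w \<bullet> (T *v d)" using inner_sym[OF symT] by blast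
    ultimately show ?thesis by simp
  qed
  have e3: "qf T (u - d) = qf T u - 2 * (u \<bullet> (T *v d)) + qf T d"
  proof -
    have "qf T (u - d) = qf T u - u \<bullet> (T *v d) - d \<bullet> (T *v u) + qf T d"
      by (simp add: matrix_vector_mult_diff_distrib inner_diff_left inner_diff_right)
    moreover have "d \<bullet> (T *v u) = u \<bullet> (T *v d)" using inner_sym[OF symT] by blast
    ultimately show ?thesis by simp
  qed
  have e4: "qf P u = qf Q u + qf T u"
    by (simp add: P_def matrix_vector_mult_add_rdistrib inner_add_right)
  show ?thesis
    using e1 e2 e3 e4 unfolding P_def[symmetric] Pi_def[symmetric] w_def[symmetric] by linarith
qed

lemma M_inv:
  fixes Q T Sq St :: "real^'n^'n"
  assumes Q: "Q ** Sq = mat 1" and T: "T ** St = mat 1" and inv: "invertible (Q + T)"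
  shows "(T - T ** matrix_inv (Q + T) ** T) ** (Sq + St) = mat 1"
proof -
  define Pi where "Pi = matrix_inv (Q + T)"
  have Pi: "Pi ** (Q + T) = mat 1" using inv_ok(2)[OF inv] Pi_def by simp
  have "T ** Pi ** T ** Sq + T ** Pi = T ** Pi ** (T ** Sq + mat 1)"
    by (simp add: matrix_add_ldistrib matrix_mul_assoc)
  also have "T ** Sq + mat 1 = (Q + T) ** Sq" using Q by (simp add: mm_add_r add.commute)
  also have "T ** Pi ** ((Q + T) ** Sq) = T ** Sq"
    by (metis Pi matrix_mul_assoc matrix_mul_rid matrix_mul_lid)
  finally have k: "T ** Pi ** T ** Sq + T ** Pi = T ** Sq" .
  have "(T - T ** Pi ** T) ** (Sq + St) = T ** Sq + T ** St - (T ** Pi ** T ** Sq + T ** Pi ** (T ** St))"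
    by (simp add: mm_diff_r matrix_add_ldistrib matrix_mul_assoc)
  also have "\<dots> = mat 1" using k T by simp
  finally show ?thesis unfolding Pi_def .
qed



lemma mv_minus:
  fixes A :: "real^'n^'m"
  shows "A *v (- x) = - (A *v x)"
  by (simp add: matrix_vector_mult_def vec_eq_iff sum_negf)

lemma qf_add:
  fixes S :: "real^'n^'n"
  assumes "transpose S = S"
  shows "qf S (v + w) = qf S v + 2 * (v \<bullet> (S *v w)) + qf S w"
proof -
  have "qf S (v + w) = qf S v + v \<bullet> (S *v w) + w \<bullet> (S *v v) + qf S w"
    by (simp add: matrix_vector_right_distrib inner_add_left inner_add_right)
  moreover have "w \<bullet> (S *v v) = v \<bullet> (S *v w)" by (rule inner_sym[OF assms])
  ultimately show ?thesis by simp
qed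

lemma qf_A:
  fixes M A :: "real^'n^'n"
  shows "qf M (A *v w) = qf (transpose A ** M ** A) w"
proof -
  have "w \<bullet> (transpose A *v (M *v (A *v w))) = (A *v w) \<bullet> (M *v (A *v w))"
    using inner_transpose[of w "transpose A" "M *v (A *v w)"] by simp
  then show ?thesis by (simp add: matrix_vector_mul_assoc matrix_mul_assoc)
qed

lemma quad_equiv:
  fixes M G C Sc A :: "real^'n^'n" and mu mc :: "real^'n"
  assumes MG: "M ** G = mat 1" and symG: "transpose G = G"
    and CS: "C ** Sc = mat 1" and symSc: "transpose Sc = Sc" and Ainv: "invertible A"
  shows "(\<exists>k. \<forall>x. qf M (A *v x - mu) = qf C (x - mc) + k) \<longleftrightarrow>
         (mu = A *v mc \<and> G = A ** Sc ** transpose A)"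
proof -
  have symM: "transpose M = M" using sym_left_inv[OF MG symG] .
  have symC: "transpose C = C" using sym_left_inv[OF CS symSc] .
  have GM: "G ** M = mat 1" using MG matrix_left_right_inverse by blast
  have ScC: "Sc ** C = mat 1" using CS matrix_left_right_inverse by blast
  define Ai where "Ai = matrix_inv A"
  have AAi: "A ** Ai = mat 1" and AiA: "Ai ** A = mat 1" using inv_ok[OF Ainv] Ai_def by auto
  define N where "N = transpose A ** M ** A"
  have symN: "transpose N = N"
    unfolding N_def by (simp add: matrix_transpose_mul symM matrix_mul_assoc)
  have qN: "qf M (A *v w) = qf N w" for w unfolding N_def by (rule qf_A)
  have AtAti: "transpose A ** transpose Ai = mat 1"
    by (metis AiA matrix_transpose_mul transpose_mat)
  show ?thesis
  proof
    assume "\<exists>k. \<forall>x. qf M (A *v x - mu) = qf C (x - mc) + k"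
    then obtain k where k: "\<And>x. qf M (A *v x - mu) = qf C (x - mc) + k" by blast
    define \<nu> where "\<nu> = Ai *v mu"
    have Anu: "A *v \<nu> = mu" unfolding \<nu>_def by (simp add: matrix_vector_mul_assoc AAi)
    have k2: "qf N (x - \<nu>) = qf C (x - mc) + k" for x
      using k[of x] qN[of "x - \<nu>"] Anu by (simp add: matrix_vector_mult_diff_distrib)
    define \<delta> where "\<delta> = \<nu> - mc"
    have sym_eq: "qf C (\<delta> + w) = qf C (\<delta> + (- w))" for w
    proof -
      have e1: "\<nu> + w - \<nu> = w" "\<nu> + w - mc = \<delta> + w" by (simp_all add: \<delta>_def algebra_simps)
      have e2: "\<nu> - w - \<nu> = - w" "\<nu> - w - mc = \<delta> + (- w)" by (simp_all add: \<delta>_def algebra_simps)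
      have "qf N w = qf C (\<delta> + w) + k" using k2[of "\<nu> + w"] by (simp only: e1)
      moreover have "qf N (- w) = qf C (\<delta> + (- w)) + k" using k2[of "\<nu> - w"] by (simp only: e2)
      moreover have "qf N (- w) = qf N w" by (simp add: mv_minus)
      ultimately show ?thesis by simp
    qed
    have "w \<bullet> (C *v \<delta>) = 0" for w
    proof -
      have "qf C (\<delta> + w) = qf C \<delta> + 2 * (\<delta> \<bullet> (C *v w)) + qf C w" by (rule qf_add[OF symC])
      moreover have "qf C (\<delta> + (- w)) = qf C \<delta> + 2 * (\<delta> \<bullet> (C *v (- w))) + qf C (- w)" by (rule qf_add[OF symC])
      moreover have "C *v (- w) = - (C *v w)" by (simp add: mv_minus)
      moreover have "\<delta> \<bullet> (C *v w) = w \<bullet> (C *v \<delta>)" by (rule inner_sym[OF symC])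
      ultimately show ?thesis using sym_eq[of w] by simp
    qed
    then have "(C *v \<delta>) \<bullet> (C *v \<delta>) = 0" by blast
    then have "C *v \<delta> = 0" by simp
    then have "\<delta> = 0"
    proof -
      assume C0: "C *v \<delta> = 0"
      have "\<delta> = (Sc ** C) *v \<delta>" by (simp add: ScC)
      also have "\<dots> = Sc *v (C *v \<delta>)" by (simp add: matrix_vector_mul_assoc)
      finally show ?thesis using C0 by simp
    qed
    then have nu: "\<nu> = mc" by (simp add: \<delta>_def)
    have mu: "mu = A *v mc" using Anu nu by simp
    have "k = 0" using k2[of \<nu>] nu by simp
    then have qNC: "qf N w = qf C w" for w using k2[of "w + \<nu>"] nu by simp
    have "N *v y = C *v y" for y
    proof -
      have "v \<bullet> (N *v y) = v \<bullet> (C *v y)" for v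
        using qf_add[OF symN, of v y] qf_add[OF symC, of v y] qNC[of "v + y"] qNC[of v] qNC[of y]
        by simp
      from this[of "N *v y - C *v y"]
      have "(N *v y - C *v y) \<bullet> (N *v y - C *v y) = 0" by (simp only: inner_diff_right)
      then show ?thesis by simp
    qed
    then have NC: "N = C" by (simp add: matrix_eq)
    have "transpose A ** M = C ** Ai"
    proof -
      have "transpose A ** M = transpose A ** M ** (A ** Ai)" by (simp add: AAi)
      also have "\<dots> = N ** Ai" by (simp add: N_def matrix_mul_assoc)
      finally show ?thesis using NC by simp
    qed
    then have "(A ** Sc ** transpose A) ** M = A ** (Sc ** C) ** Ai"
      by (metis matrix_mul_assoc)
    then have AM: "(A ** Sc ** transpose A) ** M = mat 1" by (simp add: ScC AAi)
    have "A ** Sc ** transpose A = (A ** Sc ** transpose A) ** (M ** G)" by (simp add: MG)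
    also have "\<dots> = ((A ** Sc ** transpose A) ** M) ** G" by (simp only: matrix_mul_assoc)
    finally have "A ** Sc ** transpose A = G" using AM by simp
    then show "mu = A *v mc \<and> G = A ** Sc ** transpose A" using mu by simp
  next
    assume asm: "mu = A *v mc \<and> G = A ** Sc ** transpose A"
    have "N ** Sc = mat 1"
    proof -
      have "N ** Sc = N ** Sc ** (transpose A ** transpose Ai)" by (simp add: AtAti)
      also have "\<dots> = transpose A ** (M ** (A ** Sc ** transpose A)) ** transpose Ai"
        by (simp add: N_def matrix_mul_assoc)
      also have "\<dots> = mat 1" using asm MG AtAti by simp
      finally show ?thesis .
    qed
    then have NC: "N = C"
    proof -
      assume NS: "N ** Sc = mat 1"
      have "N = N ** (Sc ** C)" by (simp add: ScC)
      also have "\<dots> = (N ** Sc) ** C" by (simp only: matrix_mul_assoc)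
      finally show ?thesis using NS by simp
    qed
    have "\<forall>x. qf M (A *v x - mu) = qf C (x - mc) + 0"
    proof
      fix x
      have "A *v x - mu = A *v (x - mc)" using asm by (simp add: matrix_vector_mult_diff_distrib)
      then show "qf M (A *v x - mu) = qf C (x - mc) + 0" using qN NC by simp
    qed
    then show "\<exists>k. \<forall>x. qf M (A *v x - mu) = qf C (x - mc) + k" by blast
  qed
qed



lemma gauss_eq:
  fixes S :: "real^'n^'n"
  shows "gauss mu S z = exp (-(1/2) * qf (matrix_inv S) (z - mu)) / sqrt ((2 * pi) ^ CARD('n) * det S)"
  by (simp add: gauss_def)

lemma norm_pos:
  fixes S :: "real^'n^'n"
  assumes "spd S" shows "sqrt ((2 * pi) ^ CARD('n) * det S) > 0"
  using spd_det_pos[OF assms] by simp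

lemma conv_formula:
  fixes Sq St :: "real^'n^'n" and mu :: "real^'n"
  assumes Sq: "spd Sq" and St: "spd St"
  shows "\<exists>K>0. \<forall>y. (\<integral>s. gauss mu Sq s * gauss y St s \<partial>lborel) =
      K * exp (-(1/2) * qf (matrix_inv St - matrix_inv St ** matrix_inv (matrix_inv Sq + matrix_inv St) ** matrix_inv St) (y - mu))"
proof -
  define Q where "Q = matrix_inv Sq"
  define T where "T = matrix_inv St"
  define P where "P = Q + T"
  define M where "M = T - T ** matrix_inv P ** T"
  have spdP: "spd P" unfolding P_def Q_def T_def by (intro spd_add spd_inv Sq St)
  have invP: "invertible P" using spd_invertible[OF spdP] .
  have symQ: "transpose Q = Q" using spd_inv[OF Sq] by (simp add: Q_def spd_def)
  have symT: "transpose T = T" using spd_inv[OF St] by (simp add: T_def spd_def)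
  define kq where "kq = sqrt ((2 * pi) ^ CARD('n) * det Sq)"
  define kt where "kt = sqrt ((2 * pi) ^ CARD('n) * det St)"
  have kq: "kq > 0" unfolding kq_def by (rule norm_pos[OF Sq])
  have kt: "kt > 0" unfolding kt_def by (rule norm_pos[OF St])
  obtain J where J: "J > 0" "\<And>m. (\<integral>s. exp (-(1/2) * qf P (s - m)) \<partial>lborel) = J"
    using gauss_kernel[OF spdP] by blast
  have "(\<integral>s. gauss mu Sq s * gauss y St s \<partial>lborel) = (J / (kq * kt)) * exp (-(1/2) * qf M (y - mu))" for y
  proof -
    define m where "m = mu + matrix_inv P *v (T *v (y - mu))"
    have pt: "gauss mu Sq s * gauss y St s =
        (exp (-(1/2) * qf M (y - mu)) / (kq * kt)) * exp (-(1/2) * qf P (s - m))" for s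
    proof -
      have cs: "qf Q (s - mu) + qf T ((s - mu) - (y - mu)) =
          qf P ((s - mu) - matrix_inv P *v (T *v (y - mu))) + qf M (y - mu)"
        unfolding P_def M_def using complete_sq[OF symQ symT invP[unfolded P_def]] by blast
      have e1: "(s - mu) - (y - mu) = s - y" by simp
      have e2: "(s - mu) - matrix_inv P *v (T *v (y - mu)) = s - m" by (simp add: m_def)
      have "gauss mu Sq s * gauss y St s =
          exp (-(1/2) * qf Q (s - mu)) * exp (-(1/2) * qf T (s - y)) / (kq * kt)"
        by (simp add: gauss_eq Q_def T_def kq_def kt_def)
      also have "exp (-(1/2) * qf Q (s - mu)) * exp (-(1/2) * qf T (s - y)) =
          exp (-(1/2) * (qf Q (s - mu) + qf T (s - y)))"
        by (simp add: exp_add[symmetric] algebra_simps)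
      also have "qf Q (s - mu) + qf T (s - y) = qf P (s - m) + qf M (y - mu)"
        using cs by (simp only: e1 e2)
      also have "exp (-(1/2) * (qf P (s - m) + qf M (y - mu))) =
          exp (-(1/2) * qf M (y - mu)) * exp (-(1/2) * qf P (s - m))"
        by (simp add: exp_add[symmetric] algebra_simps)
      finally show ?thesis by simp
    qed
    have "(\<integral>s. gauss mu Sq s * gauss y St s \<partial>lborel) =
        (\<integral>s. (exp (-(1/2) * qf M (y - mu)) / (kq * kt)) * exp (-(1/2) * qf P (s - m)) \<partial>lborel)"
      by (simp only: pt)
    also have "\<dots> = (exp (-(1/2) * qf M (y - mu)) / (kq * kt)) * J"
      by (simp only: integral_mult_right_zero J(2))
    finally show ?thesis by simp
  qed
  moreover have "J / (kq * kt) > 0" using J kq kt by simp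
  ultimately show ?thesis unfolding M_def T_def P_def Q_def by blast
qed

lemma prop_iff:
  fixes f g :: "'x \<Rightarrow> real"
  assumes K1: "K1 > 0" and K2: "K2 > 0" and Pp: "\<And>x. Pp x > 0"
  shows "(\<exists>c>0. \<forall>x. K1 * Pp x * exp (-(1/2) * f x) = c * (K2 * Pp x * exp (-(1/2) * g x)))
         \<longleftrightarrow> (\<exists>k. \<forall>x. f x = g x + k)"
proof
  assume "\<exists>c>0. \<forall>x. K1 * Pp x * exp (-(1/2) * f x) = c * (K2 * Pp x * exp (-(1/2) * g x))"
  then obtain c where c: "c > 0" "\<And>x. K1 * Pp x * exp (-(1/2) * f x) = c * (K2 * Pp x * exp (-(1/2) * g x))"
    by blast
  define r where "r = c * K2 / K1"
  have r: "r > 0" using c K1 K2 by (simp add: r_def)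
  have "f x = g x + (- 2 * ln r)" for x
  proof -
    have "exp (-(1/2) * f x) = r * exp (-(1/2) * g x)"
      using c(2)[of x] Pp[of x] K1 by (simp add: r_def field_simps)
    also have "\<dots> = exp (ln r + (-(1/2) * g x))" using r by (simp only: exp_add exp_ln)
    finally have "-(1/2) * f x = ln r + (-(1/2) * g x)" by simp
    then show ?thesis by simp
  qed
  then show "\<exists>k. \<forall>x. f x = g x + k" by blast
next
  assume "\<exists>k. \<forall>x. f x = g x + k"
  then obtain k where k: "\<And>x. f x = g x + k" by blast
  define c where "c = K1 * exp (-(1/2) * k) / K2"
  have "c > 0" using K1 K2 by (simp add: c_def)
  moreover have "K1 * Pp x * exp (-(1/2) * f x) = c * (K2 * Pp x * exp (-(1/2) * g x))" for x
  proof -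
    have "exp (-(1/2) * f x) = exp (-(1/2) * k) * exp (-(1/2) * g x)"
      by (simp add: k exp_add[symmetric] algebra_simps)
    then show ?thesis using K2 by (simp add: c_def field_simps)
  qed
  ultimately show "\<exists>c>0. \<forall>x. K1 * Pp x * exp (-(1/2) * f x) = c * (K2 * Pp x * exp (-(1/2) * g x))"
    by blast
qed



theorem proposition2:
  fixes \<beta> t :: real
    and blk :: "'d::finite \<Rightarrow> 'k::finite"
    and p :: "'k \<Rightarrow> real^'d \<Rightarrow> real"
    and q :: "'k \<Rightarrow> real^'d \<Rightarrow> real^'d \<Rightarrow> real"
    and Uenv :: "'e \<Rightarrow> real"
    and Uint :: "real^'d \<Rightarrow> 'e \<Rightarrow> real"
    and \<mu>c :: "'e \<Rightarrow> real^'d" and \<Sigma>c :: "'e \<Rightarrow> real^'d^'d"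
    and A \<Sigma>t :: "real^'d^'d"
    and \<mu>q :: "'e \<Rightarrow> real \<Rightarrow> real^'d" and \<Sigma>q :: "'e \<Rightarrow> real \<Rightarrow> real^'d^'d"
    and senv :: 'e
  assumes beta_pos: "\<beta> > 0"
    and t_pos: "t > 0"
    and p_block: "\<And>i x y. same_block blk i x y \<Longrightarrow> p i x = p i y"
    and p_pos: "\<And>i x. p i x > 0"
    and q_block: "\<And>i s x s' x'. same_block blk i s s' \<Longrightarrow> same_block blk i x x'
                    \<Longrightarrow> q i s x = q i s' x'"
    and Sc_spd: "\<And>e. spd (\<Sigma>c e)"
    and Uint_gauss: "\<And>e. \<exists>c>0. \<forall>ss. exp (- \<beta> * Uint ss e) = c * gauss (\<mu>c e) (\<Sigma>c e) ss"
    and St_spd: "spd \<Sigma>t"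
    and A_inv: "invertible A"
    and kernels: "\<And>s x. (\<Prod>i\<in>UNIV. q i s x) = gauss (A *v x) \<Sigma>t s"
    and Sq_spd: "\<And>e. spd (\<Sigma>q e t)"
  defines "pi_t \<equiv> \<lambda>x e. LINT ss|lborel.
              exp (- \<beta> * Uenv e) * gauss (\<mu>q e t) (\<Sigma>q e t) ss * (\<Prod>i\<in>UNIV. p i x * q i ss x)"
    and "pi_0 \<equiv> \<lambda>x e. exp (- \<beta> * Uenv e) * (\<Prod>i\<in>UNIV. p i x) * exp (- \<beta> * Uint x e)"
  shows "(\<exists>c>0. \<forall>x. pi_t x senv = c * pi_0 x senv) \<longleftrightarrow>
         (\<mu>q senv t = A *v \<mu>c senv \<and> \<Sigma>q senv t = A ** \<Sigma>c senv ** transpose A - \<Sigma>t)"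
proof -
  note pi_t_def = assms(12) and pi_0_def = assms(13)
  define E0 where "E0 = exp (- \<beta> * Uenv senv)"
  define Pp where "Pp = (\<lambda>x. \<Prod>i\<in>UNIV. p i x)"
  define mu where "mu = \<mu>q senv t"
  define Sq where "Sq = \<Sigma>q senv t"
  define Mq where "Mq = matrix_inv \<Sigma>t - matrix_inv \<Sigma>t ** matrix_inv (matrix_inv Sq + matrix_inv \<Sigma>t) ** matrix_inv \<Sigma>t"
  define C where "C = matrix_inv (\<Sigma>c senv)"
  have SqS: "spd Sq" using Sq_spd Sq_def by simp
  have E0: "E0 > 0" by (simp add: E0_def)
  have Pp: "\<And>x. Pp x > 0" unfolding Pp_def using p_pos by (simp add: prod_pos)
  obtain K where K: "K > 0" "\<And>y. (\<integral>s. gauss mu Sq s * gauss y \<Sigma>t s \<partial>lborel) = K * exp (-(1/2) * qf Mq (y - mu))"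
    using conv_formula[OF SqS St_spd, of mu] unfolding Mq_def by blast
  obtain c0 where c0: "c0 > 0" "\<And>ss. exp (- \<beta> * Uint ss senv) = c0 * gauss (\<mu>c senv) (\<Sigma>c senv) ss"
    using Uint_gauss[of senv] by blast
  define kc where "kc = sqrt ((2 * pi) ^ CARD('d) * det (\<Sigma>c senv))"
  have kc: "kc > 0" unfolding kc_def by (rule norm_pos[OF Sc_spd])
  have pit: "pi_t x senv = (E0 * K) * Pp x * exp (-(1/2) * qf Mq (A *v x - mu))" for x
  proof -
    have "pi_t x senv = (\<integral>ss. (E0 * Pp x) * (gauss mu Sq ss * gauss (A *v x) \<Sigma>t ss) \<partial>lborel)"
      unfolding pi_t_def
      by (intro Bochner_Integration.integral_cong refl)
         (simp add: prod.distrib kernels E0_def Pp_def mu_def Sq_def mult_ac)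
    also have "\<dots> = (E0 * Pp x) * (K * exp (-(1/2) * qf Mq (A *v x - mu)))"
      by (simp only: integral_mult_right_zero K(2))
    finally show ?thesis by (simp add: mult_ac)
  qed
  have pi0: "pi_0 x senv = (E0 * c0 / kc) * Pp x * exp (-(1/2) * qf C (x - \<mu>c senv))" for x
    unfolding pi_0_def c0(2) gauss_eq by (simp add: E0_def Pp_def C_def kc_def mult_ac)
  have step1: "(\<exists>c>0. \<forall>x. pi_t x senv = c * pi_0 x senv) \<longleftrightarrow>
      (\<exists>k. \<forall>x. qf Mq (A *v x - mu) = qf C (x - \<mu>c senv) + k)"
    unfolding pit pi0
    by (rule prop_iff[where f = "\<lambda>x. qf Mq (A *v x - mu)" and g = "\<lambda>x. qf C (x - \<mu>c senv)"])
       (use E0 K c0 kc Pp in auto)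
  have invSq: "invertible Sq" using spd_invertible[OF SqS] .
  have invSt: "invertible \<Sigma>t" using spd_invertible[OF St_spd] .
  have invP: "invertible (matrix_inv Sq + matrix_inv \<Sigma>t)"
    by (intro spd_invertible spd_add spd_inv SqS St_spd)
  have MG: "Mq ** (Sq + \<Sigma>t) = mat 1"
    unfolding Mq_def by (rule M_inv[OF inv_ok(2)[OF invSq] inv_ok(2)[OF invSt] invP])
  have symG: "transpose (Sq + \<Sigma>t) = Sq + \<Sigma>t"
    using SqS St_spd by (simp add: spd_def transpose_add')
  have CS: "C ** \<Sigma>c senv = mat 1"
    unfolding C_def by (rule inv_ok(2)[OF spd_invertible[OF Sc_spd]])
  have symSc: "transpose (\<Sigma>c senv) = \<Sigma>c senv" using Sc_spd spd_def by blast
  have step2: "(\<exists>k. \<forall>x. qf Mq (A *v x - mu) = qf C (x - \<mu>c senv) + k) \<longleftrightarrow>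
      (mu = A *v \<mu>c senv \<and> Sq + \<Sigma>t = A ** \<Sigma>c senv ** transpose A)"
    by (rule quad_equiv[OF MG symG CS symSc A_inv])
  have step3: "(Sq + \<Sigma>t = A ** \<Sigma>c senv ** transpose A) \<longleftrightarrow> (Sq = A ** \<Sigma>c senv ** transpose A - \<Sigma>t)"
    by (simp add: eq_diff_eq)
  show ?thesis using step1 step2 step3 by (simp add: mu_def Sq_def)
qed


end
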